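(* Let $1\le\nu<\infty$, let $\phi(z)=az+b$ with $0<|a|<1$, $b\in\mathbb{C}$, and let $w$ be an entire function, not identically zero, such that $W_{w,\phi}$ is a compact operator on $\mathcal{F}^\nu$. Then the point spectrum of $W_{w,\phi}$ consists of simple eigenvalues.
   Context: For $1\le\nu<\infty$, $\mathcal{F}^\nu$ is the space of entire functions $f$ with $\|f\|_\nu:=\left(\frac{\nu}{2\pi}\int_{\mathbb{C}}|f(z)|^\nu e^{-\nu|z|^2/2}\,dm(z)\right)^{1/\nu}<\infty$. $W_{w,\phi}f=w\,(f\circ\phi)$. *)

theory Defs
  imports "HOL-Analysis.Analysis"
begin

definition fock_space :: "real \<Rightarrow> (complex \<Rightarrow> complex) set" where
  "fock_space \<nu> = {f. f holomorphic_on UNIV \<and>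
     (\<integral>\<^sup>+ z. ennreal (norm (f z) powr \<nu> * exp (- \<nu> * norm z ^ 2 / 2)) \<partial>lborel) < \<infinity>}"

definition fock_norm :: "real \<Rightarrow> (complex \<Rightarrow> complex) \<Rightarrow> real" where
  "fock_norm \<nu> f = ((\<nu> / (2 * pi)) *
     (\<integral> z. norm (f z) powr \<nu> * exp (- \<nu> * norm z ^ 2 / 2) \<partial>lborel)) powr (1 / \<nu>)"

definition wcomp :: "(complex \<Rightarrow> complex) \<Rightarrow> (complex \<Rightarrow> complex) \<Rightarrow>
    (complex \<Rightarrow> complex) \<Rightarrow> (complex \<Rightarrow> complex)" where
  "wcomp w \<phi> f = (\<lambda>z. w z * f (\<phi> z))"

definition fock_compact_op :: "real \<Rightarrow> ((complex \<Rightarrow> complex) \<Rightarrow> (complex \<Rightarrow> complex)) \<Rightarrow> bool" where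
  "fock_compact_op \<nu> T \<longleftrightarrow>
     (\<forall>f\<in>fock_space \<nu>. T f \<in> fock_space \<nu>) \<and>
     (\<forall>fs :: nat \<Rightarrow> complex \<Rightarrow> complex. \<forall>M.
        (\<forall>n. fs n \<in> fock_space \<nu> \<and> fock_norm \<nu> (fs n) \<le> M) \<longrightarrow>
        (\<exists>r g. strict_mono r \<and> g \<in> fock_space \<nu> \<and>
           (\<lambda>n. fock_norm \<nu> (\<lambda>z. T (fs (r n)) z - g z)) \<longlonglongrightarrow> 0))"

end

theory Submission
  imports Defs "HOL-Complex_Analysis.Complex_Analysis"
begin

lemma lim_eq_at:
  fixes P Q :: "complex \<Rightarrow> complex"
  assumes "isCont P z0" "isCont Q z0" "r > 0"
    and "\<And>u. u \<in> ball z0 r \<Longrightarrow> u \<noteq> z0 \<Longrightarrow> P u = Q u"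
  shows "P z0 = Q z0"
proof -
  have P: "(P \<longlongrightarrow> P z0) (at z0)" using assms(1) isCont_def by blast
  have Q: "(Q \<longlongrightarrow> Q z0) (at z0)" using assms(2) isCont_def by blast
  have ev: "eventually (\<lambda>u. P u = Q u) (at z0)"
    unfolding eventually_at using assms(3,4)
    by (auto simp: dist_commute intro!: exI[of _ r])
  have "(Q \<longlongrightarrow> P z0) (at z0)"
    using Lim_transform_eventually[OF P ev] .
  have PQ: "(P \<longlongrightarrow> Q z0) (at z0)"
    using Lim_transform_eventually[OF Q] ev by (simp add: eq_commute)
  show ?thesis by (rule tendsto_unique[OF _ P PQ]) simp
qed

lemma hol_isCont:
  fixes f :: "complex \<Rightarrow> complex"
  assumes "f holomorphic_on UNIV"
  shows "isCont f x"
proof -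
  have "continuous_on UNIV f" by (rule holomorphic_on_imp_continuous_on[OF assms])
  then show ?thesis by (simp add: continuous_on_eq_continuous_at)
qed

lemma local_factor:
  fixes f :: "complex \<Rightarrow> complex"
  assumes "f holomorphic_on UNIV" "f \<noteq> (\<lambda>_. 0)"
  shows "\<exists>m r F. r > 0 \<and> F holomorphic_on ball z0 r \<and>
           (\<forall>u\<in>ball z0 r. F u \<noteq> 0 \<and> f u = (u - z0) ^ m * F u)"
proof (cases "f z0 = 0")
  case False
  then obtain e where e: "e > 0" "\<forall>y. dist z0 y < e \<longrightarrow> f y \<noteq> 0"
    using continuous_at_avoid[OF hol_isCont[OF assms(1)] False] by auto
  have "F holomorphic_on ball z0 e" if "F = f" for F
    using assms(1) holomorphic_on_subset that by blast
  then show ?thesis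
    using e by (intro exI[of _ 0] exI[of _ e] exI[of _ f]) (auto simp: dist_commute)
next
  case True
  have nc: "\<not> f constant_on UNIV"
  proof
    assume "f constant_on UNIV"
    then obtain c where "\<And>x. f x = c" unfolding constant_on_def by blast
    with True assms(2) show False by auto
  qed
  obtain g r n where "0 < r" "g holomorphic_on ball z0 r"
     "\<And>w. w \<in> ball z0 r \<Longrightarrow> f w = (w - z0)^n * g w"
     "\<And>w. w \<in> ball z0 r \<Longrightarrow> g w \<noteq> 0"
    using holomorphic_factor_zero_nonconstant[OF assms(1) open_UNIV connected_UNIV UNIV_I True nc]
    by metis
  then show ?thesis by (intro exI[of _ n] exI[of _ r] exI[of _ g]) auto
qed

lemma zero_eig:
  fixes f w :: "complex \<Rightarrow> complex"
  assumes "f holomorphic_on UNIV" "w holomorphic_on UNIV" "w \<noteq> (\<lambda>_. 0)" "a \<noteq> 0"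
    and "\<And>z. w z * f (a * z + b) = 0"
  shows "f = (\<lambda>_. 0)"
proof -
  obtain z1 where z1: "w z1 \<noteq> 0" using assms(3) by auto
  obtain e where e: "e > 0" "\<forall>y. dist z1 y < e \<longrightarrow> w y \<noteq> 0"
    using continuous_at_avoid[OF hol_isCont[OF assms(2)] z1] by auto
  have hol: "(\<lambda>z. f (a * z + b)) holomorphic_on UNIV"
  proof -
    have "(f \<circ> (\<lambda>z. a * z + b)) holomorphic_on UNIV"
      by (rule holomorphic_on_compose_gen[of _ UNIV _ UNIV]) (auto intro!: holomorphic_intros assms(1))
    then show ?thesis by (simp add: o_def)
  qed
  have z: "f (a * z + b) = 0" for z
  proof -
    have w0: "\<And>z. z \<in> ball z1 e \<Longrightarrow> f (a * z + b) = 0"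
      using e assms(5) by (metis mem_ball mult_eq_0_iff)
    have "(\<lambda>z. f (a * z + b)) z = (\<lambda>_. 0) z"
      by (rule analytic_continuation_open[of "ball z1 e" UNIV]) (use e hol w0 in auto)
    then show ?thesis by simp
  qed
  have "f y = 0" for y
    using z[of "(y - b) / a"] assms(4) by simp
  then show ?thesis by auto
qed

lemma ball_isCont:
  fixes F :: "complex \<Rightarrow> complex"
  assumes "F holomorphic_on ball z0 r" "r > 0"
  shows "isCont F z0"
proof -
  have "continuous_on (ball z0 r) F" by (rule holomorphic_on_imp_continuous_on[OF assms(1)])
  then show ?thesis using assms(2) by (simp add: continuous_on_eq_continuous_at)
qed

lemma pow_inj:
  fixes a :: complex
  assumes "0 < norm a" "norm a < 1" "a ^ m = a ^ k"
  shows "m = k"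
proof -
  have "norm a ^ m = norm a ^ k" using assms(3) by (metis norm_power)
  then show ?thesis using assms(1,2)
    by (metis linorder_neqE_nat order_less_irrefl power_strict_decreasing_iff)
qed

lemma eig_order:
  fixes f w F :: "complex \<Rightarrow> complex"
  assumes "w holomorphic_on UNIV" "norm a < 1" "z0 = b / (1 - a)"
    and eq: "\<And>z. w z * f (a * z + b) = l * f z"
    and "r > 0" "F holomorphic_on ball z0 r"
    and fac: "\<forall>u\<in>ball z0 r. F u \<noteq> 0 \<and> f u = (u - z0) ^ m * F u"
  shows "w z0 * a ^ m = l"
proof -
  have a1: "1 - a \<noteq> 0" using assms(2) by auto
  have phi: "a * u + b - z0 = a * (u - z0)" for u
    using a1 assms(3) by (simp add: field_simps)
  have fix0: "a * z0 + b = z0" using phi[of z0] by simp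
  have aball: "a * u + b \<in> ball z0 r" if "u \<in> ball z0 r" for u
  proof -
    have "dist z0 (a * u + b) = norm (a * u + b - z0)"
      by (simp add: dist_norm norm_minus_commute)
    also have "\<dots> = norm (a * (u - z0))" by (simp only: phi)
    also have "\<dots> = norm a * dist z0 u"
      by (simp add: norm_mult dist_norm norm_minus_commute)
    also have "\<dots> \<le> dist z0 u"
      using assms(2) by (simp add: mult_left_le_one_le)
    finally show ?thesis using that by simp
  qed
  have Fc: "isCont F z0" by (rule ball_isCont[OF assms(6,5)])
  have c1: "isCont (\<lambda>u. w u * a ^ m * F (a * u + b)) z0"
  proof -
    have "isCont (F \<circ> (\<lambda>u. a * u + b)) z0"
      by (rule continuous_at_compose) (auto intro!: continuous_intros simp: fix0 Fc)
    then have "isCont (\<lambda>u. F (a * u + b)) z0" by (simp add: o_def)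
    then show ?thesis using hol_isCont[OF assms(1)] by (auto intro!: continuous_intros)
  qed
  have c2: "isCont (\<lambda>u. l * F u) z0" using Fc by (auto intro!: continuous_intros)
  have "w u * a ^ m * F (a * u + b) = l * F u" if "u \<in> ball z0 r" "u \<noteq> z0" for u
  proof -
    have "w u * ((a * u + b - z0) ^ m * F (a * u + b)) = l * ((u - z0) ^ m * F u)"
      using eq[of u] fac aball[OF that(1)] that(1) by simp
    then have e1: "w u * ((a * (u - z0)) ^ m * F (a * u + b)) = l * ((u - z0) ^ m * F u)"
      by (simp only: phi)
    have e2: "(u - z0) ^ m * (w u * a ^ m * F (a * u + b)) = w u * ((a * (u - z0)) ^ m * F (a * u + b))"
      by (simp only: power_mult_distrib mult_ac)
    have "(u - z0) ^ m * (w u * a ^ m * F (a * u + b)) = (u - z0) ^ m * (l * F u)"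
      using e1 e2 by (simp only: mult_ac)
    then show ?thesis using that(2) by simp
  qed
  then have "w z0 * a ^ m * F (a * z0 + b) = l * F z0"
    using lim_eq_at[OF c1 c2 assms(5)] by blast
  then have "(w z0 * a ^ m) * F z0 = l * F z0" unfolding fix0 .
  moreover have "F z0 \<noteq> 0" using fac assms(5) by simp
  ultimately show ?thesis by simp
qed

theorem theorem3p5:
  fixes \<nu> :: real and a b :: complex and w :: "complex \<Rightarrow> complex"
  assumes "1 \<le> \<nu>"
    and "0 < norm a" and "norm a < 1"
    and "w holomorphic_on UNIV"
    and "w \<noteq> (\<lambda>_. 0)"
    and "fock_compact_op \<nu> (wcomp w (\<lambda>z. a * z + b))"
  shows "\<forall>l f g. f \<in> fock_space \<nu> \<and> f \<noteq> (\<lambda>_. 0) \<and>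
                 wcomp w (\<lambda>z. a * z + b) f = (\<lambda>z. l * f z) \<and>
                 g \<in> fock_space \<nu> \<and> wcomp w (\<lambda>z. a * z + b) g = (\<lambda>z. l * g z)
           \<longrightarrow> (\<exists>c. g = (\<lambda>z. c * f z))"
proof (intro allI impI, elim conjE)
  fix l f g
  assume fF: "f \<in> fock_space \<nu>" and fnz: "f \<noteq> (\<lambda>_. 0)"
    and feq: "wcomp w (\<lambda>z. a * z + b) f = (\<lambda>z. l * f z)"
    and gF: "g \<in> fock_space \<nu>" and geq: "wcomp w (\<lambda>z. a * z + b) g = (\<lambda>z. l * g z)"
  define z0 where "z0 = b / (1 - a)"
  have a0: "a \<noteq> 0" using assms(2) by auto
  have fh: "f holomorphic_on UNIV" using fF by (simp add: fock_space_def)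
  have gh: "g holomorphic_on UNIV" using gF by (simp add: fock_space_def)
  have fe: "w z * f (a * z + b) = l * f z" for z
    using fun_cong[OF feq, of z] by (simp add: wcomp_def)
  have ge: "w z * g (a * z + b) = l * g z" for z
    using fun_cong[OF geq, of z] by (simp add: wcomp_def)
  have l0: "l \<noteq> 0"
  proof
    assume "l = 0"
    then have "f = (\<lambda>_. 0)" using zero_eig[OF fh assms(4,5) a0, of b] fe by simp
    with fnz show False by simp
  qed
  obtain m r1 F where F: "r1 > 0" "F holomorphic_on ball z0 r1"
      "\<forall>u\<in>ball z0 r1. F u \<noteq> 0 \<and> f u = (u - z0) ^ m * F u"
    using local_factor[OF fh fnz, of z0] by blast
  have lm: "w z0 * a ^ m = l" by (rule eig_order[OF assms(4,3) z0_def fe F])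
  have w0: "w z0 \<noteq> 0" using lm l0 by auto
  show "\<exists>c. g = (\<lambda>z. c * f z)"
  proof (cases "g = (\<lambda>_. 0)")
    case True
    then show ?thesis by (intro exI[of _ 0]) simp
  next
    case False
    obtain k r2 G where G: "r2 > 0" "G holomorphic_on ball z0 r2"
        "\<forall>u\<in>ball z0 r2. G u \<noteq> 0 \<and> g u = (u - z0) ^ k * G u"
      using local_factor[OF gh False, of z0] by blast
    have lk: "w z0 * a ^ k = l" by (rule eig_order[OF assms(4,3) z0_def ge G])
    have "a ^ k = a ^ m" using lk lm w0 by auto
    then have km: "k = m" using pow_inj[OF assms(2,3)] by blast
    define c where "c = G z0 / F z0"
    define h where "h = (\<lambda>z. g z - c * f z)"
    have "h = (\<lambda>_. 0)"
    proof (rule ccontr)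
      assume hnz: "h \<noteq> (\<lambda>_. 0)"
      have hh: "h holomorphic_on UNIV" unfolding h_def using fh gh by (auto intro!: holomorphic_intros)
      have he: "w z * h (a * z + b) = l * h z" for z
        unfolding h_def using fe[of z] ge[of z] by (simp add: algebra_simps)
      obtain n r3 H where H: "r3 > 0" "H holomorphic_on ball z0 r3"
          "\<forall>u\<in>ball z0 r3. H u \<noteq> 0 \<and> h u = (u - z0) ^ n * H u"
        using local_factor[OF hh hnz, of z0] by blast
      have ln: "w z0 * a ^ n = l" by (rule eig_order[OF assms(4,3) z0_def he H])
      have "a ^ n = a ^ m" using ln lm w0 by auto
      then have nm: "n = m" using pow_inj[OF assms(2,3)] by blast
      define r where "r = min r1 (min r2 r3)"
      have r0: "r > 0" unfolding r_def using F(1) G(1) H(1) by simp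
      have "H u = G u - c * F u" if "u \<in> ball z0 r" "u \<noteq> z0" for u
      proof -
        have u1: "u \<in> ball z0 r1" and u2: "u \<in> ball z0 r2" and u3: "u \<in> ball z0 r3"
          using that(1) unfolding r_def by auto
        have "(u - z0) ^ m * H u = h u" using H(3) u3 nm by simp
        also have "\<dots> = (u - z0) ^ m * (G u - c * F u)"
          unfolding h_def using F(3) u1 G(3) u2 km by (simp add: algebra_simps)
        finally show ?thesis using that(2) by simp
      qed
      moreover have "isCont H z0"
        by (rule ball_isCont[OF H(2)]) (use H(1) in simp)
      moreover have "isCont (\<lambda>u. G u - c * F u) z0"
        using ball_isCont[OF G(2) G(1)] ball_isCont[OF F(2) F(1)]
        by (auto intro!: continuous_intros)
      ultimately have "H z0 = G z0 - c * F z0"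
        using lim_eq_at[where P=H and Q="\<lambda>u. G u - c * F u"] r0 by blast
      moreover have "F z0 \<noteq> 0" using F(1,3) by simp
      ultimately have "H z0 = 0" unfolding c_def by simp
      moreover have "H z0 \<noteq> 0" using H(1,3) by simp
      ultimately show False by simp
    qed
    then have "g = (\<lambda>z. c * f z)"
      unfolding h_def by (metis (no_types, lifting) eq_iff_diff_eq_0)
    then show ?thesis by blast
  qed
qed

end
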